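(* Let $f\in H_{d,n}$ be a centered random polynomial with $O(n+1)$-invariant distribution and let $n'\le n$ be a positive integer. Then the restriction $f'\in H_{d,n'}$ of $f$ to $\mathbb{R}^{n'+1}$ (obtained by substituting $X_{n'+1}=\cdots=X_n=0$) is $O(n'+1)$-invariant and has the same parameter, $\delta(f')=\delta(f)$. Moreover, if $f$ is Kostlan distributed, then so is $f'$.
   Context: $H_{d,n}$ is the space of homogeneous real polynomials of degree $d$ in $X_0,\ldots,X_n$, with $O(n+1)$ acting by $(gf)(X)=f(g^{-1}X)$; $f$ is $O(n+1)$-invariant if $gf$ has the same distribution as $f$ for all $g$. The parameter is $\delta(f)=\mathbb{E}(\partial_{X_k}f(q))^2/\mathbb{E}f(q)^2$ with $q=(1,0,\ldots,0)$, $1\le k\le n$ (equivalently $\mathbb{E}\|Df(x)\|^2/(n\,\mathbb{E}f(x)^2)$ for $x\in S^n$, $Df(x)$ the derivative of $f|_{S^n}$). $f=\sum_{|\alpha|=d}f_\alpha X^\alpha$ is Kostlan distributed if the coefficients $f_\alpha$ are independent centered Gaussian with variance $\frac{d!}{\alpha_0!\cdots\alpha_n!}$. *)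

theory Defs
  imports "HOL-Probability.Probability"
begin

text \<open>Homogeneous real polynomials of degree d in X_0..X_n are represented by their
coefficient vectors, indexed by exponent vectors alpha :: nat => nat with alpha i = 0
for i > n and total degree d.\<close>

definition mexps :: "nat \<Rightarrow> nat \<Rightarrow> (nat \<Rightarrow> nat) set" where
  "mexps d n = {\<alpha>. (\<forall>i. n < i \<longrightarrow> \<alpha> i = 0) \<and> (\<Sum>i\<le>n. \<alpha> i) = d}"

definition Hspace :: "nat \<Rightarrow> nat \<Rightarrow> ((nat \<Rightarrow> nat) \<Rightarrow> real) measure" where
  "Hspace d n = PiM (mexps d n) (\<lambda>_. borel)"

definition peval :: "nat \<Rightarrow> nat \<Rightarrow> ((nat \<Rightarrow> nat) \<Rightarrow> real) \<Rightarrow> (nat \<Rightarrow> real) \<Rightarrow> real" where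
  "peval d n c x = (\<Sum>\<alpha>\<in>mexps d n. c \<alpha> * (\<Prod>i\<le>n. x i ^ \<alpha> i))"

definition orth :: "nat \<Rightarrow> (nat \<Rightarrow> nat \<Rightarrow> real) \<Rightarrow> bool" where
  "orth n g \<longleftrightarrow> (\<forall>i\<le>n. \<forall>j\<le>n. (\<Sum>k\<le>n. g k i * g k j) = (if i = j then 1 else 0))"

text \<open>Action (g f)(X) = f(g^{-1} X); for orthogonal g, g^{-1} is the transpose.
 g f is the unique element of H_{d,n} with this evaluation.\<close>
definition pact :: "nat \<Rightarrow> nat \<Rightarrow> (nat \<Rightarrow> nat \<Rightarrow> real) \<Rightarrow> ((nat \<Rightarrow> nat) \<Rightarrow> real) \<Rightarrow> ((nat \<Rightarrow> nat) \<Rightarrow> real)" where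
  "pact d n g c = (THE c'. c' \<in> extensional (mexps d n) \<and>
      (\<forall>x. peval d n c' x = peval d n c (\<lambda>i. \<Sum>j\<le>n. g j i * x j)))"

definition Oinvariant :: "'w measure \<Rightarrow> nat \<Rightarrow> nat \<Rightarrow> ('w \<Rightarrow> (nat \<Rightarrow> nat) \<Rightarrow> real) \<Rightarrow> bool" where
  "Oinvariant M d n f \<longleftrightarrow> (\<forall>g. orth n g \<longrightarrow>
      distr M (Hspace d n) (\<lambda>w. pact d n g (f w)) = distr M (Hspace d n) f)"

definition centered :: "'w measure \<Rightarrow> nat \<Rightarrow> nat \<Rightarrow> ('w \<Rightarrow> (nat \<Rightarrow> nat) \<Rightarrow> real) \<Rightarrow> bool" where
  "centered M d n f \<longleftrightarrow> (\<forall>\<alpha>\<in>mexps d n. integrable M (\<lambda>w. f w \<alpha>) \<and> (\<integral>w. f w \<alpha> \<partial>M) = 0)"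

definition qpt :: "nat \<Rightarrow> real" where
  "qpt i = (if i = 0 then 1 else 0)"

definition pderiv_q :: "nat \<Rightarrow> nat \<Rightarrow> nat \<Rightarrow> ((nat \<Rightarrow> nat) \<Rightarrow> real) \<Rightarrow> real" where
  "pderiv_q d n k c = deriv (\<lambda>t. peval d n c (\<lambda>i. qpt i + (if i = k then t else 0))) 0"

definition pdelta :: "'w measure \<Rightarrow> nat \<Rightarrow> nat \<Rightarrow> nat \<Rightarrow> ('w \<Rightarrow> (nat \<Rightarrow> nat) \<Rightarrow> real) \<Rightarrow> real" where
  "pdelta M d n k f = (\<integral>w. (pderiv_q d n k (f w))\<^sup>2 \<partial>M) / (\<integral>w. (peval d n (f w) qpt)\<^sup>2 \<partial>M)"

definition kostlan_var :: "nat \<Rightarrow> nat \<Rightarrow> (nat \<Rightarrow> nat) \<Rightarrow> real" where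
  "kostlan_var d n \<alpha> = fact d / (\<Prod>i\<le>n. fact (\<alpha> i))"

definition kostlan :: "'w measure \<Rightarrow> nat \<Rightarrow> nat \<Rightarrow> ('w \<Rightarrow> (nat \<Rightarrow> nat) \<Rightarrow> real) \<Rightarrow> bool" where
  "kostlan M d n f \<longleftrightarrow> distr M (Hspace d n) f =
     PiM (mexps d n) (\<lambda>\<alpha>. density lborel (normal_density 0 (sqrt (kostlan_var d n \<alpha>))))"

text \<open>Restriction to R^{n'+1}: substitute X_{n'+1} = ... = X_n = 0.\<close>
definition prestr :: "nat \<Rightarrow> nat \<Rightarrow> ((nat \<Rightarrow> nat) \<Rightarrow> real) \<Rightarrow> ((nat \<Rightarrow> nat) \<Rightarrow> real)" where
  "prestr d n' c = restrict c (mexps d n')"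

end

theory Submission
  imports Defs
begin

definition pmono :: "nat \<Rightarrow> (nat \<Rightarrow> nat) \<Rightarrow> (nat \<Rightarrow> real) \<Rightarrow> real" where
  "pmono n \<alpha> x = (\<Prod>i\<le>n. x i ^ \<alpha> i)"

lemma peval_mono: "peval d n c x = (\<Sum>\<alpha>\<in>mexps d n. c \<alpha> * pmono n \<alpha> x)"
  by (simp add: peval_def pmono_def)

lemma finite_mexps: "finite (mexps d n)"
proof -
  have "inj_on (\<lambda>\<alpha>. restrict \<alpha> {..n}) (mexps d n)"
  proof (rule inj_onI)
    fix a b assume a: "a \<in> mexps d n" and b: "b \<in> mexps d n" and e: "restrict a {..n} = restrict b {..n}"
    show "a = b"
    proof
      fix i show "a i = b i"
      proof (cases "i \<le> n")
        case True then show ?thesis using fun_cong[OF e, of i] by simp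
      next
        case False then show ?thesis using a b by (simp add: mexps_def)
      qed
    qed
  qed
  moreover have "(\<lambda>\<alpha>. restrict \<alpha> {..n}) ` mexps d n \<subseteq> PiE {..n} (\<lambda>_. {..d})"
  proof
    fix y assume "y \<in> (\<lambda>\<alpha>. restrict \<alpha> {..n}) ` mexps d n"
    then obtain a where a: "a \<in> mexps d n" and y: "y = restrict a {..n}" by auto
    have "\<And>i. i \<le> n \<Longrightarrow> a i \<le> d"
    proof -
      fix i assume "i \<le> n"
      then have "a i \<le> (\<Sum>j\<le>n. a j)" by (intro member_le_sum) auto
      then show "a i \<le> d" using a by (simp add: mexps_def)
    qed
    then show "y \<in> PiE {..n} (\<lambda>_. {..d})" using y by auto
  qed
  ultimately show ?thesis
    by (meson finite_PiE finite_atMost finite_imageD finite_subset)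
qed

lemma mexps_sum: "\<alpha> \<in> mexps d n \<Longrightarrow> (\<Sum>i\<le>n. \<alpha> i) = d"
  by (simp add: mexps_def)

lemma mexps_le: "\<alpha> \<in> mexps d n \<Longrightarrow> \<alpha> i \<le> d"
proof -
  assume a: "\<alpha> \<in> mexps d n"
  show "\<alpha> i \<le> d"
  proof (cases "i \<le> n")
    case True
    then have "\<alpha> i \<le> (\<Sum>j\<le>n. \<alpha> j)" by (intro member_le_sum) auto
    then show ?thesis using a by (simp add: mexps_def)
  next
    case False then show ?thesis using a by (simp add: mexps_def)
  qed
qed

definition hom :: "nat \<Rightarrow> nat \<Rightarrow> ((nat \<Rightarrow> real) \<Rightarrow> real) \<Rightarrow> bool" where
  "hom d n F \<longleftrightarrow> (\<exists>c. \<forall>x. F x = peval d n c x)"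

lemma hom_add: "hom d n F \<Longrightarrow> hom d n G \<Longrightarrow> hom d n (\<lambda>x. F x + G x)"
  unfolding hom_def peval_def
  apply clarify
  subgoal for a b by (rule exI[of _ "\<lambda>\<alpha>. a \<alpha> + b \<alpha>"]) (simp add: distrib_right sum.distrib)
  done

lemma hom_scale: "hom d n F \<Longrightarrow> hom d n (\<lambda>x. r * F x)"
  unfolding hom_def peval_def
  apply clarify
  subgoal for a by (rule exI[of _ "\<lambda>\<alpha>. r * a \<alpha>"]) (simp add: sum_distrib_left mult.assoc)
  done

lemma hom_zero: "hom d n (\<lambda>x. 0)"
  unfolding hom_def peval_def by (rule exI[of _ "\<lambda>_. 0"]) simp

lemma hom_sum: "finite S \<Longrightarrow> (\<And>s. s \<in> S \<Longrightarrow> hom d n (F s)) \<Longrightarrow> hom d n (\<lambda>x. \<Sum>s\<in>S. F s x)"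
  by (induction S rule: finite_induct) (auto intro: hom_add hom_zero)

lemma hom_monomial: "\<gamma> \<in> mexps d n \<Longrightarrow> hom d n (pmono n \<gamma>)"
proof -
  assume g: "\<gamma> \<in> mexps d n"
  have "pmono n \<gamma> x = peval d n (\<lambda>\<alpha>. if \<alpha> = \<gamma> then 1 else 0) x" for x
  proof -
    have "peval d n (\<lambda>\<alpha>. if \<alpha> = \<gamma> then 1 else 0) x = (\<Sum>\<alpha>\<in>mexps d n. if \<alpha> = \<gamma> then pmono n \<alpha> x else 0)"
      unfolding peval_mono by (intro sum.cong) auto
    also have "\<dots> = pmono n \<gamma> x" using g finite_mexps by (simp add: sum.delta')
    finally show ?thesis by simp
  qed
  then show ?thesis unfolding hom_def by blast
qed

lemma mono_add: "pmono n (\<lambda>i. \<alpha> i + \<beta> i) x = pmono n \<alpha> x * pmono n \<beta> x"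
  by (simp add: pmono_def power_add prod.distrib)

lemma mexps_add: "\<alpha> \<in> mexps d1 n \<Longrightarrow> \<beta> \<in> mexps d2 n \<Longrightarrow> (\<lambda>i. \<alpha> i + \<beta> i) \<in> mexps (d1 + d2) n"
  by (simp add: mexps_def sum.distrib)

lemma hom_mult: "hom d1 n F \<Longrightarrow> hom d2 n G \<Longrightarrow> hom (d1 + d2) n (\<lambda>x. F x * G x)"
proof -
  assume "hom d1 n F" "hom d2 n G"
  then obtain a b where a: "\<And>x. F x = peval d1 n a x" and b: "\<And>x. G x = peval d2 n b x"
    unfolding hom_def by blast
  have e: "F x * G x = (\<Sum>\<alpha>\<in>mexps d1 n. \<Sum>\<beta>\<in>mexps d2 n. (a \<alpha> * b \<beta>) * pmono n (\<lambda>i. \<alpha> i + \<beta> i) x)" for x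
    unfolding a b peval_mono mono_add sum_product by (intro sum.cong refl) (simp add: algebra_simps)
  have "hom (d1 + d2) n (\<lambda>x. \<Sum>\<alpha>\<in>mexps d1 n. \<Sum>\<beta>\<in>mexps d2 n. (a \<alpha> * b \<beta>) * pmono n (\<lambda>i. \<alpha> i + \<beta> i) x)"
  proof (rule hom_sum[OF finite_mexps])
    fix \<alpha> assume al: "\<alpha> \<in> mexps d1 n"
    show "hom (d1 + d2) n (\<lambda>x. \<Sum>\<beta>\<in>mexps d2 n. (a \<alpha> * b \<beta>) * pmono n (\<lambda>i. \<alpha> i + \<beta> i) x)"
    proof (rule hom_sum[OF finite_mexps])
      fix \<beta> assume be: "\<beta> \<in> mexps d2 n"
      show "hom (d1 + d2) n (\<lambda>x. (a \<alpha> * b \<beta>) * pmono n (\<lambda>i. \<alpha> i + \<beta> i) x)"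
        using hom_scale[OF hom_monomial[OF mexps_add[OF al be]], of "a \<alpha> * b \<beta>"] by simp
    qed
  qed
  then show ?thesis unfolding e .
qed

lemma hom_const: "hom 0 n (\<lambda>x. r)"
proof -
  have "(\<lambda>_. 0) \<in> mexps 0 n" by (simp add: mexps_def)
  from hom_scale[OF hom_monomial[OF this], of r] show ?thesis by (simp add: pmono_def)
qed

lemma hom_var: "j \<le> n \<Longrightarrow> hom 1 n (\<lambda>x. x j)"
proof -
  assume j: "j \<le> n"
  have "(\<lambda>i. if i = j then 1 else 0) \<in> mexps 1 n" using j by (simp add: mexps_def)
  moreover have "pmono n (\<lambda>i. if i = j then 1 else 0) = (\<lambda>x. x j)"
    using j by (intro ext) (simp add: pmono_def if_distrib cong: if_cong)
  ultimately show ?thesis using hom_monomial[of "\<lambda>i. if i = j then 1 else 0" 1 n] by simp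
qed

lemma hom_pow: "hom e n F \<Longrightarrow> hom (k * e) n (\<lambda>x. F x ^ k)"
proof (induction k)
  case 0 then show ?case using hom_const[of n 1] by simp
next
  case (Suc k)
  from hom_mult[OF Suc.prems Suc.IH[OF Suc.prems]] show ?case by (simp add: add.commute)
qed

lemma hom_prod: "finite S \<Longrightarrow> (\<And>s. s \<in> S \<Longrightarrow> hom (e s) n (F s)) \<Longrightarrow>
   hom (\<Sum>s\<in>S. e s) n (\<lambda>x. \<Prod>s\<in>S. F s x)"
proof (induction S rule: finite_induct)
  case empty then show ?case using hom_const[of n 1] by simp
next
  case (insert s S)
  have "hom (e s + (\<Sum>s\<in>S. e s)) n (\<lambda>x. F s x * (\<Prod>s\<in>S. F s x))"
    using insert by (intro hom_mult) auto
  then show ?case using insert by simp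
qed

definition lin :: "nat \<Rightarrow> (nat \<Rightarrow> nat \<Rightarrow> real) \<Rightarrow> (nat \<Rightarrow> real) \<Rightarrow> (nat \<Rightarrow> real)" where
  "lin n g x = (\<lambda>i. \<Sum>j\<le>n. g j i * x j)"

lemma hom_lin: "hom 1 n (\<lambda>x. lin n g x i)"
  unfolding lin_def by (intro hom_sum hom_scale hom_var) auto

lemma hom_comp: "hom d n (\<lambda>x. peval d n c (lin n g x))"
proof -
  have "hom d n (\<lambda>x. c \<alpha> * (\<Prod>i\<le>n. lin n g x i ^ \<alpha> i))" if a: "\<alpha> \<in> mexps d n" for \<alpha>
  proof -
    have "hom (\<Sum>i\<le>n. \<alpha> i * 1) n (\<lambda>x. \<Prod>i\<le>n. lin n g x i ^ \<alpha> i)"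
      by (intro hom_prod hom_pow hom_lin) auto
    then show ?thesis using mexps_sum[OF a] by (simp add: hom_scale)
  qed
  then show ?thesis unfolding peval_def by (intro hom_sum finite_mexps)
qed

lemma digits_unique:
  fixes B :: nat
  shows "(\<forall>i\<le>n. a i < B) \<Longrightarrow> (\<forall>i\<le>n. b i < B) \<Longrightarrow>
    (\<Sum>i\<le>n. a i * B ^ i) = (\<Sum>i\<le>n. b i * B ^ i) \<Longrightarrow> (\<forall>i\<le>n. a i = b i)"
proof (induction n arbitrary: a b)
  case 0 then show ?case by simp
next
  case (Suc n)
  have sa: "(\<Sum>i\<le>Suc n. a i * B ^ i) = a 0 + B * (\<Sum>i\<le>n. a (Suc i) * B ^ i)" for a
    unfolding sum.atMost_Suc_shift power_Suc by (simp add: sum_distrib_left mult.left_commute)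
  have a0: "a 0 < B" "b 0 < B" using Suc.prems(1,2) by auto
  have e: "a 0 + B * (\<Sum>i\<le>n. a (Suc i) * B ^ i) = b 0 + B * (\<Sum>i\<le>n. b (Suc i) * B ^ i)"
    using Suc.prems(3) unfolding sa .
  have m: "(x + B * y) mod B = x" if "x < B" for x y :: nat using that by simp
  have h0: "a 0 = b 0" using arg_cong[OF e, of "\<lambda>x. x mod B"] m[OF a0(1)] m[OF a0(2)] by simp
  have "B > 0" using a0 by simp
  then have e2: "(\<Sum>i\<le>n. a (Suc i) * B ^ i) = (\<Sum>i\<le>n. b (Suc i) * B ^ i)" using e h0 by simp
  have pa: "\<forall>i\<le>n. a (Suc i) < B" "\<forall>i\<le>n. b (Suc i) < B" using Suc.prems(1,2) by simp_all
  have ih: "\<forall>i\<le>n. a (Suc i) = b (Suc i)"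
    by (rule Suc.IH[OF pa e2])
  show ?case
  proof (intro allI impI)
    fix i assume "i \<le> Suc n"
    then show "a i = b i" using h0 ih by (cases i) auto
  qed
qed

lemma peval_zero_coeff:
  assumes z: "\<And>x. peval d n c x = 0" and al: "\<alpha> \<in> mexps d n"
  shows "c \<alpha> = 0"
proof -
  define B where "B = Suc d"
  define enc where "enc \<beta> = (\<Sum>i\<le>n. \<beta> i * B ^ i)" for \<beta> :: "nat \<Rightarrow> nat"
  have inj: "\<beta> = \<gamma>" if "\<beta> \<in> mexps d n" "\<gamma> \<in> mexps d n" "enc \<beta> = enc \<gamma>" for \<beta> \<gamma>
  proof
    fix i
    have lt: "\<forall>i\<le>n. \<beta> i < B" "\<forall>i\<le>n. \<gamma> i < B"
      using mexps_le[OF that(1)] mexps_le[OF that(2)] by (auto simp: B_def less_Suc_eq_le)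
    show "\<beta> i = \<gamma> i"
    proof (cases "i \<le> n")
      case True then show ?thesis using digits_unique[OF lt] that(3) unfolding enc_def by blast
    next
      case False then show ?thesis using that by (simp add: mexps_def)
    qed
  qed
  have pm: "pmono n \<beta> (\<lambda>i. t ^ (B ^ i)) = t ^ enc \<beta>" for \<beta> and t :: real
    unfolding pmono_def enc_def power_sum by (intro prod.cong refl) (simp add: power_mult[symmetric] mult.commute)
  define K where "K = (\<Sum>\<beta>\<in>mexps d n. enc \<beta>)"
  have encK: "enc \<beta> \<le> K" if "\<beta> \<in> mexps d n" for \<beta>
    unfolding K_def using that finite_mexps by (intro member_le_sum) auto
  define a where "a k = (\<Sum>\<beta>\<in>{\<beta> \<in> mexps d n. enc \<beta> = k}. c \<beta>)" for k
  have "(\<Sum>k\<le>K. a k * t ^ k) = 0" for t :: real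
  proof -
    have "(\<Sum>k\<le>K. a k * t ^ k) = (\<Sum>k\<le>K. \<Sum>\<beta>\<in>{\<beta> \<in> mexps d n. enc \<beta> = k}. c \<beta> * t ^ enc \<beta>)"
      unfolding a_def sum_distrib_right by (intro sum.cong refl) auto
    also have "\<dots> = (\<Sum>\<beta>\<in>mexps d n. c \<beta> * t ^ enc \<beta>)"
      by (rule sum.group) (auto simp: finite_mexps encK)
    also have "\<dots> = peval d n c (\<lambda>i. t ^ (B ^ i))" unfolding peval_mono pm ..
    finally show ?thesis using z by simp
  qed
  then have "\<forall>k\<le>K. a k = 0" using polyfun_eq_0[of a K] by simp
  then have "a (enc \<alpha>) = 0" using encK[OF al] by simp
  moreover have "{\<beta> \<in> mexps d n. enc \<beta> = enc \<alpha>} = {\<alpha>}"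
  proof (intro equalityI subsetI)
    fix \<beta> assume "\<beta> \<in> {\<beta> \<in> mexps d n. enc \<beta> = enc \<alpha>}"
    then show "\<beta> \<in> {\<alpha>}" using inj[of \<beta> \<alpha>] al by simp
  qed (use al in simp)
  ultimately show ?thesis unfolding a_def by simp
qed

lemma peval_diff: "peval d n (\<lambda>\<alpha>. a \<alpha> - b \<alpha>) x = peval d n a x - peval d n b x"
  by (simp add: peval_def left_diff_distrib sum_subtractf)

lemma peval_restrict: "peval d n (restrict c (mexps d n)) x = peval d n c x"
  by (simp add: peval_def)

lemma peval_inj:
  assumes "a \<in> extensional (mexps d n)" "b \<in> extensional (mexps d n)" "\<And>x. peval d n a x = peval d n b x"
  shows "a = b"
proof (rule extensionalityI[OF assms(1,2)])
  fix \<alpha> assume "\<alpha> \<in> mexps d n"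
  from peval_zero_coeff[of d n "\<lambda>\<alpha>. a \<alpha> - b \<alpha>", OF _ this] show "a \<alpha> = b \<alpha>"
    using assms(3) by (simp add: peval_diff)
qed

lemma pact_ex1: "\<exists>!c'. c' \<in> extensional (mexps d n) \<and> (\<forall>x. peval d n c' x = peval d n c (lin n g x))"
proof -
  obtain c0 where c0: "\<And>x. peval d n c (lin n g x) = peval d n c0 x"
    using hom_comp[of d n c g] unfolding hom_def by blast
  show ?thesis
  proof (rule ex1I[of _ "restrict c0 (mexps d n)"])
    show "restrict c0 (mexps d n) \<in> extensional (mexps d n) \<and> (\<forall>x. peval d n (restrict c0 (mexps d n)) x = peval d n c (lin n g x))"
      by (simp add: peval_restrict c0)
  next
    fix c' assume "c' \<in> extensional (mexps d n) \<and> (\<forall>x. peval d n c' x = peval d n c (lin n g x))"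
    then show "c' = restrict c0 (mexps d n)"
      by (intro peval_inj) (auto simp: peval_restrict c0)
  qed
qed

lemma pact_lin: "pact d n g c = (THE c'. c' \<in> extensional (mexps d n) \<and> (\<forall>x. peval d n c' x = peval d n c (lin n g x)))"
  unfolding pact_def lin_def ..

lemma pact_prop: "pact d n g c \<in> extensional (mexps d n)" "peval d n (pact d n g c) x = peval d n c (lin n g x)"
  using theI'[OF pact_ex1[of d n c g]] unfolding pact_lin[symmetric] by auto

lemma pact_eqI: "c' \<in> extensional (mexps d n) \<Longrightarrow> (\<And>x. peval d n c' x = peval d n c (lin n g x)) \<Longrightarrow> pact d n g c = c'"
  unfolding pact_lin by (rule the1_equality[OF pact_ex1]) auto

lemma mexps_mono: "n' \<le> n \<Longrightarrow> mexps d n' \<subseteq> mexps d n"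
proof
  fix \<alpha> assume le: "n' \<le> n" and a: "\<alpha> \<in> mexps d n'"
  have "(\<Sum>i\<le>n'. \<alpha> i) = (\<Sum>i\<le>n. \<alpha> i)"
    by (rule sum.mono_neutral_left) (use le a in \<open>auto simp: mexps_def\<close>)
  then show "\<alpha> \<in> mexps d n" using a le by (auto simp: mexps_def)
qed

lemma peval_cong: "(\<And>i. i \<le> n \<Longrightarrow> x i = y i) \<Longrightarrow> peval d n c x = peval d n c y"
  unfolding peval_def by (intro sum.cong refl arg_cong2[where f="(*)"] prod.cong) auto

lemma peval_tail:
  assumes le: "n' \<le> n" and z: "\<And>i. n' < i \<Longrightarrow> x i = 0"
  shows "peval d n c x = peval d n' (prestr d n' c) x"
proof -
  have zero: "c \<alpha> * pmono n \<alpha> x = 0" if a: "\<alpha> \<in> mexps d n - mexps d n'" for \<alpha>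
  proof -
    have "\<exists>i. n' < i \<and> i \<le> n \<and> \<alpha> i \<noteq> 0"
    proof (rule ccontr)
      assume nex: "\<not> (\<exists>i. n' < i \<and> i \<le> n \<and> \<alpha> i \<noteq> 0)"
      have t: "\<alpha> i = 0" if "n' < i" for i
        using nex a that by (cases "i \<le> n") (auto simp: mexps_def)
      have "(\<Sum>i\<le>n'. \<alpha> i) = (\<Sum>i\<le>n. \<alpha> i)"
        by (rule sum.mono_neutral_left) (use le t in auto)
      then have "\<alpha> \<in> mexps d n'" using a t by (auto simp: mexps_def)
      then show False using a by simp
    qed
    then obtain i where i: "n' < i" "i \<le> n" "\<alpha> i \<noteq> 0" by blast
    have "pmono n \<alpha> x = 0" unfolding pmono_def
      by (rule prod_zero) (use i z in auto)
    then show ?thesis by simp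
  qed
  have pm: "pmono n \<alpha> x = pmono n' \<alpha> x" if a: "\<alpha> \<in> mexps d n'" for \<alpha>
    unfolding pmono_def
    by (rule sum.mono_neutral_right[where 'a=nat, THEN sym, OF finite_atMost] prod.mono_neutral_right[OF finite_atMost])
       (use le a in \<open>auto simp: mexps_def\<close>)
  have "peval d n c x = (\<Sum>\<alpha>\<in>mexps d n'. c \<alpha> * pmono n \<alpha> x)"
    unfolding peval_mono
    by (rule sum.mono_neutral_right[OF finite_mexps mexps_mono[OF le]]) (use zero in auto)
  also have "\<dots> = peval d n' (prestr d n' c) x"
    unfolding peval_mono prestr_def by (intro sum.cong refl) (simp add: pm)
  finally show ?thesis .
qed

definition ztail :: "nat \<Rightarrow> (nat \<Rightarrow> real) \<Rightarrow> (nat \<Rightarrow> real)" where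
  "ztail n' x = (\<lambda>i. if i \<le> n' then x i else 0)"

lemma peval_ztail: "peval d n' c (ztail n' x) = peval d n' c x"
  by (rule peval_cong) (simp add: ztail_def)

definition extm :: "nat \<Rightarrow> (nat \<Rightarrow> nat \<Rightarrow> real) \<Rightarrow> (nat \<Rightarrow> nat \<Rightarrow> real)" where
  "extm n' g = (\<lambda>k i. if k \<le> n' \<and> i \<le> n' then g k i else if k = i then 1 else 0)"

lemma lin_extm:
  assumes le: "n' \<le> n"
  shows "lin n (extm n' g) (ztail n' x) = ztail n' (lin n' g x)"
proof
  fix i
  have "lin n (extm n' g) (ztail n' x) i = (\<Sum>j\<le>n. if j \<in> {..n'} then (if i \<le> n' then g j i * x j else 0) else 0)"
    unfolding lin_def by (intro sum.cong refl) (auto simp: extm_def ztail_def)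
  also have "\<dots> = (\<Sum>j\<in>{..n} \<inter> {..n'}. (if i \<le> n' then g j i * x j else 0))"
    by (rule sum.inter_restrict[symmetric]) simp
  also have "{..n} \<inter> {..n'} = {..n'}" using le by auto
  finally show "lin n (extm n' g) (ztail n' x) i = ztail n' (lin n' g x) i"
    by (simp add: ztail_def lin_def)
qed

lemma orth_extm:
  assumes le: "n' \<le> n" and o: "orth n' g"
  shows "orth n (extm n' g)"
  unfolding orth_def
proof (intro allI impI)
  fix i j assume i: "i \<le> n" and j: "j \<le> n"
  have split: "{..n} = {..n'} \<union> {n'<..n}" using le by auto
  have S: "(\<Sum>k\<le>n. h k) = (\<Sum>k\<le>n'. h k) + (\<Sum>k\<in>{n'<..n}. h k)" for h :: "nat \<Rightarrow> real"
    unfolding split by (rule sum.union_disjoint) auto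
  let ?e = "extm n' g"
  show "(\<Sum>k\<le>n. ?e k i * ?e k j) = (if i = j then 1 else 0)"
  proof (cases "i \<le> n'")
    case True
    then have A: "(\<Sum>k\<in>{n'<..n}. ?e k i * ?e k j) = 0" by (intro sum.neutral) (auto simp: extm_def)
    show ?thesis
    proof (cases "j \<le> n'")
      case True
      have "(\<Sum>k\<le>n'. ?e k i * ?e k j) = (\<Sum>k\<le>n'. g k i * g k j)"
        using \<open>i \<le> n'\<close> True by (intro sum.cong) (auto simp: extm_def)
      then show ?thesis using S A o True \<open>i \<le> n'\<close> unfolding orth_def by simp
    next
      case False
      have "(\<Sum>k\<le>n'. ?e k i * ?e k j) = 0" using False by (intro sum.neutral) (auto simp: extm_def)
      then show ?thesis using S A False \<open>i \<le> n'\<close> by auto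
    qed
  next
    case False
    have B: "(\<Sum>k\<le>n'. ?e k i * ?e k j) = 0" using False by (intro sum.neutral) (auto simp: extm_def)
    have "(\<Sum>k\<in>{n'<..n}. ?e k i * ?e k j) = (\<Sum>k\<in>{n'<..n}. if k = i then (if i = j then 1 else 0) else 0)"
      using False by (intro sum.cong) (auto simp: extm_def)
    also have "\<dots> = (if i = j then 1 else 0)" using False i by (simp add: sum.delta')
    finally show ?thesis using S B by simp
  qed
qed

lemma pact_restr:
  assumes le: "n' \<le> n"
  shows "pact d n' g (prestr d n' c) = prestr d n' (pact d n (extm n' g) c)"
proof (rule pact_eqI)
  show "prestr d n' (pact d n (extm n' g) c) \<in> extensional (mexps d n')"
    by (simp add: prestr_def)
  fix x
  have zt: "\<And>i. n' < i \<Longrightarrow> ztail n' y i = 0" for y by (simp add: ztail_def)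
  have "peval d n' (prestr d n' (pact d n (extm n' g) c)) x
      = peval d n' (prestr d n' (pact d n (extm n' g) c)) (ztail n' x)" by (simp add: peval_ztail)
  also have "\<dots> = peval d n (pact d n (extm n' g) c) (ztail n' x)" by (rule peval_tail[OF le zt, symmetric])
  also have "\<dots> = peval d n c (lin n (extm n' g) (ztail n' x))" by (rule pact_prop)
  also have "\<dots> = peval d n c (ztail n' (lin n' g x))" by (simp add: lin_extm[OF le])
  also have "\<dots> = peval d n' (prestr d n' c) (ztail n' (lin n' g x))" by (rule peval_tail[OF le zt])
  also have "\<dots> = peval d n' (prestr d n' c) (lin n' g x)" by (simp add: peval_ztail)
  finally show "peval d n' (prestr d n' (pact d n (extm n' g) c)) x = peval d n' (prestr d n' c) (lin n' g x)" .
qed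

lemma space_Hspace: "space (Hspace d n) = PiE (mexps d n) (\<lambda>_. UNIV)"
  by (simp add: Hspace_def space_PiM)

lemma meas_linfun: "(\<lambda>c. \<Sum>\<alpha>\<in>mexps d n. c \<alpha> * K \<alpha>) \<in> borel_measurable (Hspace d n)"
  unfolding Hspace_def
  by (intro borel_measurable_sum borel_measurable_times measurable_component_singleton borel_measurable_const)

lemma peval_E: "\<beta> \<in> mexps d n \<Longrightarrow> peval d n (\<lambda>\<alpha>. if \<alpha> = \<beta> then 1 else 0) x = pmono n \<beta> x"
proof -
  assume g: "\<beta> \<in> mexps d n"
  have "peval d n (\<lambda>\<alpha>. if \<alpha> = \<beta> then 1 else 0) x = (\<Sum>\<alpha>\<in>mexps d n. if \<alpha> = \<beta> then pmono n \<alpha> x else 0)"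
    unfolding peval_mono by (intro sum.cong) auto
  also have "\<dots> = pmono n \<beta> x" using g finite_mexps by (simp add: sum.delta')
  finally show ?thesis .
qed

lemma pact_linear:
  assumes c: "c \<in> extensional (mexps d n)"
  shows "pact d n g c = restrict (\<lambda>\<alpha>. \<Sum>\<beta>\<in>mexps d n. c \<beta> * pact d n g (\<lambda>\<gamma>. if \<gamma> = \<beta> then 1 else 0) \<alpha>) (mexps d n)"
proof (rule pact_eqI)
  fix x
  let ?P = "\<lambda>\<beta>. pact d n g (\<lambda>\<gamma>. if \<gamma> = \<beta> then 1 else 0)"
  have "peval d n (restrict (\<lambda>\<alpha>. \<Sum>\<beta>\<in>mexps d n. c \<beta> * ?P \<beta> \<alpha>) (mexps d n)) x
     = (\<Sum>\<alpha>\<in>mexps d n. (\<Sum>\<beta>\<in>mexps d n. c \<beta> * ?P \<beta> \<alpha>) * pmono n \<alpha> x)"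
    by (simp add: peval_restrict peval_mono)
  also have "\<dots> = (\<Sum>\<beta>\<in>mexps d n. c \<beta> * (\<Sum>\<alpha>\<in>mexps d n. ?P \<beta> \<alpha> * pmono n \<alpha> x))"
  proof -
    have "(\<Sum>\<alpha>\<in>mexps d n. (\<Sum>\<beta>\<in>mexps d n. c \<beta> * ?P \<beta> \<alpha>) * pmono n \<alpha> x)
        = (\<Sum>\<alpha>\<in>mexps d n. \<Sum>\<beta>\<in>mexps d n. c \<beta> * (?P \<beta> \<alpha> * pmono n \<alpha> x))"
      by (simp only: sum_distrib_right mult.assoc)
    also have "\<dots> = (\<Sum>\<beta>\<in>mexps d n. \<Sum>\<alpha>\<in>mexps d n. c \<beta> * (?P \<beta> \<alpha> * pmono n \<alpha> x))"
      by (rule sum.swap)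
    also have "\<dots> = (\<Sum>\<beta>\<in>mexps d n. c \<beta> * (\<Sum>\<alpha>\<in>mexps d n. ?P \<beta> \<alpha> * pmono n \<alpha> x))"
      by (simp only: sum_distrib_left)
    finally show ?thesis .
  qed
  also have "\<dots> = (\<Sum>\<beta>\<in>mexps d n. c \<beta> * pmono n \<beta> (lin n g x))"
  proof (intro sum.cong refl)
    fix \<beta> assume b: "\<beta> \<in> mexps d n"
    have "(\<Sum>\<alpha>\<in>mexps d n. ?P \<beta> \<alpha> * pmono n \<alpha> x) = peval d n (?P \<beta>) x" by (simp add: peval_mono)
    also have "\<dots> = pmono n \<beta> (lin n g x)" by (simp add: pact_prop peval_E[OF b])
    finally show "c \<beta> * (\<Sum>\<alpha>\<in>mexps d n. ?P \<beta> \<alpha> * pmono n \<alpha> x) = c \<beta> * pmono n \<beta> (lin n g x)" by simp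
  qed
  also have "\<dots> = peval d n c (lin n g x)" by (simp add: peval_mono)
  finally show "peval d n (restrict (\<lambda>\<alpha>. \<Sum>\<beta>\<in>mexps d n. c \<beta> * ?P \<beta> \<alpha>) (mexps d n)) x = peval d n c (lin n g x)" .
qed simp

lemma meas_pact: "(\<lambda>c. pact d n g c) \<in> measurable (Hspace d n) (Hspace d n)"
proof -
  have meas: "(\<lambda>c. restrict (\<lambda>\<alpha>. \<Sum>\<beta>\<in>mexps d n. c \<beta> * pact d n g (\<lambda>\<gamma>. if \<gamma> = \<beta> then 1 else 0) \<alpha>) (mexps d n))
      \<in> measurable (Hspace d n) (Hspace d n)"
    unfolding Hspace_def
    by (intro measurable_restrict borel_measurable_sum borel_measurable_times measurable_component_singleton borel_measurable_const)
  have eq: "pact d n g c = restrict (\<lambda>\<alpha>. \<Sum>\<beta>\<in>mexps d n. c \<beta> * pact d n g (\<lambda>\<gamma>. if \<gamma> = \<beta> then 1 else 0) \<alpha>) (mexps d n)"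
    if "c \<in> space (Hspace d n)" for c
    by (rule pact_linear) (use that in \<open>simp add: space_Hspace PiE_def\<close>)
  show ?thesis
    apply (subst measurable_cong[OF eq])
     apply assumption
    apply (rule meas)
    done
qed

definition ptk :: "nat \<Rightarrow> real \<Rightarrow> nat \<Rightarrow> real" where
  "ptk k t = (\<lambda>i. qpt i + (if i = k then t else 0))"

lemma pderiv_q_ptk: "pderiv_q d n k c = deriv (\<lambda>t. peval d n c (ptk k t)) 0"
  by (simp add: pderiv_q_def ptk_def)

lemma pmono_ptk_deriv: "\<exists>D. ((\<lambda>t. pmono n \<alpha> (ptk k t)) has_real_derivative D) (at 0)"
proof -
  have "\<exists>D. ((\<lambda>t. ptk k t i ^ \<alpha> i) has_real_derivative D) (at 0)" for i
  proof (cases "i = k")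
    case True
    have "((\<lambda>t. (qpt i + t) ^ \<alpha> i) has_real_derivative (of_nat (\<alpha> i) * (qpt i + 0) ^ (\<alpha> i - 1) * 1)) (at 0)"
      by (intro derivative_eq_intros) auto
    then show ?thesis using True by (auto simp: ptk_def)
  next
    case False
    then show ?thesis by (auto simp: ptk_def intro: DERIV_const)
  qed
  then obtain D where D: "\<And>i. ((\<lambda>t. ptk k t i ^ \<alpha> i) has_real_derivative D i) (at 0)" by metis
  show ?thesis unfolding pmono_def
    by (rule exI, rule has_field_derivative_prod[of "{..n}" "\<lambda>i t. ptk k t i ^ \<alpha> i" D]) (rule D)
qed

lemma pderiv_formula: "pderiv_q d n k c = (\<Sum>\<alpha>\<in>mexps d n. c \<alpha> * deriv (\<lambda>t. pmono n \<alpha> (ptk k t)) 0)"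
proof -
  have D: "((\<lambda>t. pmono n \<alpha> (ptk k t)) has_real_derivative deriv (\<lambda>t. pmono n \<alpha> (ptk k t)) 0) (at 0)" for \<alpha>
  proof -
    obtain D0 where D0: "((\<lambda>t. pmono n \<alpha> (ptk k t)) has_real_derivative D0) (at 0)"
      using pmono_ptk_deriv[of n \<alpha> k] by blast
    moreover have "deriv (\<lambda>t. pmono n \<alpha> (ptk k t)) 0 = D0" by (rule DERIV_imp_deriv[OF D0])
    ultimately show ?thesis by simp
  qed
  have "((\<lambda>t. peval d n c (ptk k t)) has_real_derivative (\<Sum>\<alpha>\<in>mexps d n. c \<alpha> * deriv (\<lambda>t. pmono n \<alpha> (ptk k t)) 0)) (at 0)"
    unfolding peval_mono by (intro DERIV_sum DERIV_cmult D)
  then show ?thesis unfolding pderiv_q_ptk by (rule DERIV_imp_deriv)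
qed

lemma meas_pderiv: "(\<lambda>c. (pderiv_q d n k c)\<^sup>2) \<in> borel_measurable (Hspace d n)"
  unfolding pderiv_formula by (intro borel_measurable_power meas_linfun)

lemma meas_pevq: "(\<lambda>c. (peval d n c qpt)\<^sup>2) \<in> borel_measurable (Hspace d n)"
  unfolding peval_mono by (intro borel_measurable_power meas_linfun)

lemma transfer_int:
  assumes inv: "Oinvariant M d n f" and o: "orth n g" and h: "h \<in> borel_measurable (Hspace d n)"
    and f: "f \<in> measurable M (Hspace d n)"
  shows "(\<integral>w. h (pact d n g (f w)) \<partial>M) = (\<integral>w. (h (f w) :: real) \<partial>M)"
proof -
  have m: "(\<lambda>w. pact d n g (f w)) \<in> measurable M (Hspace d n)"
    using measurable_compose[OF f meas_pact] .
  have "(\<integral>w. h (pact d n g (f w)) \<partial>M) = integral\<^sup>L (distr M (Hspace d n) (\<lambda>w. pact d n g (f w))) h"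
    by (rule integral_distr[OF m h, symmetric])
  also have "\<dots> = integral\<^sup>L (distr M (Hspace d n) f) h" using inv o unfolding Oinvariant_def by simp
  also have "\<dots> = (\<integral>w. h (f w) \<partial>M)" by (rule integral_distr[OF f h])
  finally show ?thesis .
qed

definition swp :: "nat \<Rightarrow> nat \<Rightarrow> nat \<Rightarrow> nat" where
  "swp k k' i = (if i = k then k' else if i = k' then k else i)"

definition permm :: "nat \<Rightarrow> nat \<Rightarrow> nat \<Rightarrow> nat \<Rightarrow> real" where
  "permm k k' = (\<lambda>a b. if a = swp k k' b then 1 else 0)"

lemma swp_le: "k \<le> n \<Longrightarrow> k' \<le> n \<Longrightarrow> i \<le> n \<Longrightarrow> swp k k' i \<le> n"
  by (simp add: swp_def)

lemma swp_inj: "swp k k' i = swp k k' j \<longleftrightarrow> i = j"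
  by (auto simp: swp_def)

lemma orth_perm: "k \<le> n \<Longrightarrow> k' \<le> n \<Longrightarrow> orth n (permm k k')"
  unfolding orth_def
proof (intro allI impI)
  fix i j assume k: "k \<le> n" "k' \<le> n" and i: "i \<le> n" and j: "j \<le> n"
  have "(\<Sum>a\<le>n. permm k k' a i * permm k k' a j) = (\<Sum>a\<le>n. if a = swp k k' i then (if i = j then 1 else 0) else 0)"
    by (intro sum.cong refl) (auto simp: permm_def swp_inj)
  also have "\<dots> = (if i = j then 1 else 0)"
    using swp_le[OF k i] by (simp add: sum.delta')
  finally show "(\<Sum>a\<le>n. permm k k' a i * permm k k' a j) = (if i = j then 1 else 0)" .
qed

lemma lin_perm: "k \<le> n \<Longrightarrow> k' \<le> n \<Longrightarrow> i \<le> n \<Longrightarrow> lin n (permm k k') y i = y (swp k k' i)"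
proof -
  assume k: "k \<le> n" "k' \<le> n" and i: "i \<le> n"
  have "lin n (permm k k') y i = (\<Sum>j\<le>n. if j = swp k k' i then y j else 0)"
    unfolding lin_def by (intro sum.cong refl) (auto simp: permm_def)
  also have "\<dots> = y (swp k k' i)" using swp_le[OF k i] by (simp add: sum.delta')
  finally show ?thesis .
qed

lemma pderiv_perm:
  assumes "1 \<le> k" "k \<le> n" "1 \<le> k'" "k' \<le> n"
  shows "pderiv_q d n k (pact d n (permm k k') c) = pderiv_q d n k' c"
proof -
  have "peval d n (pact d n (permm k k') c) (ptk k t) = peval d n c (ptk k' t)" for t
  proof -
    have "peval d n (pact d n (permm k k') c) (ptk k t) = peval d n c (lin n (permm k k') (ptk k t))"
      by (rule pact_prop)
    also have "\<dots> = peval d n c (ptk k' t)"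
    proof (rule peval_cong)
      fix i assume i: "i \<le> n"
      show "lin n (permm k k') (ptk k t) i = ptk k' t i"
        unfolding lin_perm[OF assms(2,4) i] using assms by (auto simp: ptk_def swp_def qpt_def)
    qed
    finally show ?thesis .
  qed
  then show ?thesis unfolding pderiv_q_ptk by simp
qed

lemma prestr_eq: "prestr d n' = (\<lambda>c. restrict c (mexps d n'))"
  by (rule ext) (simp add: prestr_def)

lemma meas_prestr: "n' \<le> n \<Longrightarrow> prestr d n' \<in> measurable (Hspace d n) (Hspace d n')"
  unfolding prestr_eq Hspace_def by (rule measurable_restrict_subset[OF mexps_mono])

lemma kostlan_var_eq: "n' \<le> n \<Longrightarrow> \<alpha> \<in> mexps d n' \<Longrightarrow> kostlan_var d n \<alpha> = kostlan_var d n' \<alpha>"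
proof -
  assume le: "n' \<le> n" and a: "\<alpha> \<in> mexps d n'"
  have "(\<Prod>i\<le>n'. fact (\<alpha> i)) = (\<Prod>i\<le>n. fact (\<alpha> i) :: real)"
    by (rule prod.mono_neutral_left) (use le a in \<open>auto simp: mexps_def\<close>)
  then show ?thesis by (simp add: kostlan_var_def)
qed

lemma kv_pos: "0 < kostlan_var d n \<alpha>"
  unfolding kostlan_var_def by (intro divide_pos_pos prod_pos) auto

theorem lemma4p7:
  fixes M :: "'w measure" and f :: "'w \<Rightarrow> (nat \<Rightarrow> nat) \<Rightarrow> real" and d n n' :: nat
  assumes "prob_space M"
    and "f \<in> measurable M (Hspace d n)"
    and "centered M d n f"
    and "Oinvariant M d n f"
    and "1 \<le> n'" and "n' \<le> n"
  shows "Oinvariant M d n' (\<lambda>w. prestr d n' (f w)) \<and>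
     (\<forall>k\<in>{1..n}. \<forall>k'\<in>{1..n'}. pdelta M d n' k' (\<lambda>w. prestr d n' (f w)) = pdelta M d n k f) \<and>
     (kostlan M d n f \<longrightarrow> kostlan M d n' (\<lambda>w. prestr d n' (f w)))"
proof (intro conjI ballI impI)
  note f = assms(2) and inv = assms(4) and le = assms(6)
  have mr: "prestr d n' \<in> measurable (Hspace d n) (Hspace d n')" by (rule meas_prestr[OF le])
  show "Oinvariant M d n' (\<lambda>w. prestr d n' (f w))"
    unfolding Oinvariant_def
  proof (intro allI impI)
    fix g assume og: "orth n' g"
    let ?G = "extm n' g"
    have mG: "(\<lambda>w. pact d n ?G (f w)) \<in> measurable M (Hspace d n)"
      using measurable_compose[OF f meas_pact] .
    have "distr M (Hspace d n') (\<lambda>w. pact d n' g (prestr d n' (f w)))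
        = distr M (Hspace d n') (\<lambda>w. prestr d n' (pact d n ?G (f w)))"
      by (simp add: pact_restr[OF le])
    also have "\<dots> = distr (distr M (Hspace d n) (\<lambda>w. pact d n ?G (f w))) (Hspace d n') (prestr d n')"
      using distr_distr[OF mr mG] by (simp add: o_def)
    also have "\<dots> = distr (distr M (Hspace d n) f) (Hspace d n') (prestr d n')"
      using inv orth_extm[OF le og] unfolding Oinvariant_def by simp
    also have "\<dots> = distr M (Hspace d n') (\<lambda>w. prestr d n' (f w))"
      using distr_distr[OF mr f] by (simp add: o_def)
    finally show "distr M (Hspace d n') (\<lambda>w. pact d n' g (prestr d n' (f w))) = distr M (Hspace d n') (\<lambda>w. prestr d n' (f w))" .
  qed
next
  fix k k' assume k: "k \<in> {1..n}" and k': "k' \<in> {1..n'}"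
  note f = assms(2) and inv = assms(4) and le = assms(6)
  have tail: "\<And>i. n' < i \<Longrightarrow> ptk k' t i = 0" for t using k' by (auto simp: ptk_def qpt_def)
  have tailq: "\<And>i. n' < i \<Longrightarrow> qpt i = 0" using assms(5) by (auto simp: qpt_def)
  have rk: "pderiv_q d n' k' (prestr d n' c) = pderiv_q d n k' c" for c
  proof -
    have "(\<lambda>t. peval d n' (prestr d n' c) (ptk k' t)) = (\<lambda>t. peval d n c (ptk k' t))"
      by (intro ext peval_tail[OF le, symmetric] tail)
    then show ?thesis unfolding pderiv_q_ptk by simp
  qed
  have rq: "peval d n' (prestr d n' c) qpt = peval d n c qpt" for c
    by (intro peval_tail[OF le, symmetric] tailq)
  have "(\<integral>w. (pderiv_q d n k (pact d n (permm k k') (f w)))\<^sup>2 \<partial>M) = (\<integral>w. (pderiv_q d n k (f w))\<^sup>2 \<partial>M)"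
    by (rule transfer_int[OF inv orth_perm meas_pderiv f]) (use k k' le in auto)
  moreover have "pderiv_q d n k (pact d n (permm k k') c) = pderiv_q d n k' c" for c
    by (rule pderiv_perm) (use k k' le in auto)
  ultimately have num: "(\<integral>w. (pderiv_q d n k' (f w))\<^sup>2 \<partial>M) = (\<integral>w. (pderiv_q d n k (f w))\<^sup>2 \<partial>M)"
    by simp
  show "pdelta M d n' k' (\<lambda>w. prestr d n' (f w)) = pdelta M d n k f"
    unfolding pdelta_def rk rq num ..
next
  note f = assms(2) and le = assms(6)
  assume ko: "kostlan M d n f"
  define N where "N n0 \<alpha> = density lborel (normal_density 0 (sqrt (kostlan_var d n0 \<alpha>)))" for n0 \<alpha>
  have mr: "prestr d n' \<in> measurable (Hspace d n) (Hspace d n')" by (rule meas_prestr[OF le])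
  interpret P: product_prob_space "N n" UNIV
  proof -
    have pN: "prob_space (N n i)" for i unfolding N_def by (rule prob_space_normal_density) (simp add: kv_pos)
    show "product_prob_space (N n)"
      by (intro product_prob_space.intro product_sigma_finite.intro product_prob_space_axioms.intro prob_space_imp_sigma_finite pN)
  qed
  have "distr M (Hspace d n') (\<lambda>w. prestr d n' (f w)) = distr (distr M (Hspace d n) f) (Hspace d n') (prestr d n')"
    using distr_distr[OF mr f] by (simp add: o_def)
  also have "\<dots> = distr (PiM (mexps d n) (N n)) (Hspace d n') (\<lambda>c. restrict c (mexps d n'))"
    using ko unfolding kostlan_def N_def prestr_eq by simp
  also have "\<dots> = distr (PiM (mexps d n) (N n)) (PiM (mexps d n') (N n)) (\<lambda>c. restrict c (mexps d n'))"
    by (rule distr_cong) (auto simp: Hspace_def N_def intro!: sets_PiM_cong)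
  also have "\<dots> = PiM (mexps d n') (N n)"
    by (rule P.distr_restrict[symmetric, OF mexps_mono[OF le] finite_mexps])
  also have "\<dots> = PiM (mexps d n') (N n')"
    by (rule PiM_cong) (auto simp: N_def kostlan_var_eq[OF le])
  finally show "kostlan M d n' (\<lambda>w. prestr d n' (f w))"
    unfolding kostlan_def N_def .
qed

end
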